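(* Let $p\ge0$ be an integer and let $u$ be a differentiable Gaussian random field of order $p$ on $\Gamma$. Let $S\subset\Gamma$ be an open set whose boundary consists of finitely many points. Then for each $s\in\partial S$ and each edge $e\in\mathcal E_s$, we have $u_e(s),u_e'(s),\dots,u_e^{(p)}(s)\in H_+(\partial S)$.
   Context: $\Gamma$ is a compact connected metric graph (finite sets of vertices and edges, each edge $e$ identified with $[0,\ell_e]$, points $s=(t,e)$, geodesic metric $d$). $S_\varepsilon=\{s:\exists z\in S,d(s,z)<\varepsilon\}$. For $s\in\Gamma$, $\mathcal E_s$ is the set of edges incident to $s$ (if $s$ is interior to an edge $e$, $\mathcal E_s=\{e\}$); $u_e(s)$ means $u_e(t)$ where $u_e$ is $u$ restricted to $e$ as a function of $t\in[0,\ell_e]$ and $s$ corresponds to $t$ on $e$. For a Gaussian random field $u$ and $S\subset\Gamma$: $H(S)$ is the closure in $L_2(\Omega)$ of $\mathrm{span}\{u(s):s\in S\}$, and $H_+(S)=\bigcap_{\varepsilon>0}H(S_\varepsilon)$. Weak $L_2(\Omega)$ derivatives: a map $v:[0,\ell_e]\to H(\Gamma)$ is weakly differentiable at $t$ if there is $v'(t)\in H(\Gamma)$ with $\mathbb E[w(v(t_n)-v(t))/(t_n-t)]\to\mathbb E[wv'(t)]$ for every $w\in H(\Gamma)$ and every sequence $t_n\to t$, $t_n\in[0,\ell_e]\setminus\{t\}$; higher-order weak derivatives are defined inductively ($v$ has a $k$-th weak derivative at $t$ if $v^{(k-1)}$ exists on all of $[0,\ell_e]$ and is weakly differentiable at $t$).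 $v$ is weakly continuous if $t\mapsto\mathbb E[wv(t)]$ is continuous for every $w\in H(\Gamma)$. A Gaussian random field $u$ is a differentiable GRF of order $p\ge1$ if for every edge $e$ the weak derivatives $u_e^{(j)}(t)$, $j=1,\dots,p$, exist for all $t\in[0,\ell_e]$ and $u_e^{(j)}$, $j=0,\dots,p$, are weakly continuous; it is a differentiable GRF of order $0$ if it is continuous in $L_2(\Omega)$. *)

theory Defs
  imports "HOL-Probability.Probability"
begin

text \<open>Points of the graph are represented canonically: a vertex v is Inl v, a point
interior to edge e at parameter 0 < t < len e is Inr (e, t).\<close>

type_synonym ('v, 'e) gpoint = "'v + ('e \<times> real)"

definition gpt :: "('e \<Rightarrow> 'v) \<Rightarrow> ('e \<Rightarrow> 'v) \<Rightarrow> ('e \<Rightarrow> real) \<Rightarrow> 'e \<Rightarrow> real \<Rightarrow> ('v, 'e) gpoint" where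
  "gpt src tgt len e t =
     (if t = 0 then Inl (src e) else if t = len e then Inl (tgt e) else Inr (e, t))"

definition gpoints :: "'v set \<Rightarrow> 'e set \<Rightarrow> ('e \<Rightarrow> 'v) \<Rightarrow> ('e \<Rightarrow> 'v) \<Rightarrow> ('e \<Rightarrow> real) \<Rightarrow> ('v, 'e) gpoint set" where
  "gpoints V E src tgt len = Inl ` V \<union> {gpt src tgt len e t | e t. e \<in> E \<and> t \<in> {0..len e}}"

inductive greach :: "'e set \<Rightarrow> ('e \<Rightarrow> 'v) \<Rightarrow> ('e \<Rightarrow> 'v) \<Rightarrow> ('e \<Rightarrow> real) \<Rightarrow> ('v, 'e) gpoint \<Rightarrow> ('v, 'e) gpoint \<Rightarrow> real \<Rightarrow> bool"
  for E src tgt len where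
  refl: "greach E src tgt len x x 0"
| step: "e \<in> E \<Longrightarrow> a \<in> {0..len e} \<Longrightarrow> b \<in> {0..len e} \<Longrightarrow>
         greach E src tgt len (gpt src tgt len e b) y c \<Longrightarrow>
         greach E src tgt len (gpt src tgt len e a) y (\<bar>a - b\<bar> + c)"

definition gdist :: "'e set \<Rightarrow> ('e \<Rightarrow> 'v) \<Rightarrow> ('e \<Rightarrow> 'v) \<Rightarrow> ('e \<Rightarrow> real) \<Rightarrow> ('v, 'e) gpoint \<Rightarrow> ('v, 'e) gpoint \<Rightarrow> real" where
  "gdist E src tgt len x y = Inf {c. greach E src tgt len x y c}"

definition compact_connected_metric_graph :: "'v set \<Rightarrow> 'e set \<Rightarrow> ('e \<Rightarrow> 'v) \<Rightarrow> ('e \<Rightarrow> 'v) \<Rightarrow> ('e \<Rightarrow> real) \<Rightarrow> bool" where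
  "compact_connected_metric_graph V E src tgt len \<longleftrightarrow>
     finite V \<and> finite E \<and> V \<noteq> {} \<and>
     (\<forall>e\<in>E. src e \<in> V \<and> tgt e \<in> V \<and> 0 < len e) \<and>
     (\<forall>x\<in>gpoints V E src tgt len. \<forall>y\<in>gpoints V E src tgt len. \<exists>c. greach E src tgt len x y c)"

definition incident_edges :: "'e set \<Rightarrow> ('e \<Rightarrow> 'v) \<Rightarrow> ('e \<Rightarrow> 'v) \<Rightarrow> ('v, 'e) gpoint \<Rightarrow> 'e set" where
  "incident_edges E src tgt s =
     (case s of Inl v \<Rightarrow> {e \<in> E. src e = v \<or> tgt e = v} | Inr (e, t) \<Rightarrow> {e})"

definition gnbhd :: "'v set \<Rightarrow> 'e set \<Rightarrow> ('e \<Rightarrow> 'v) \<Rightarrow> ('e \<Rightarrow> 'v) \<Rightarrow> ('e \<Rightarrow> real) \<Rightarrow> ('v, 'e) gpoint set \<Rightarrow> real \<Rightarrow> ('v, 'e) gpoint set" where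
  "gnbhd V E src tgt len S \<epsilon> =
     {s \<in> gpoints V E src tgt len. \<exists>z\<in>S. gdist E src tgt len s z < \<epsilon>}"

definition gopen :: "'v set \<Rightarrow> 'e set \<Rightarrow> ('e \<Rightarrow> 'v) \<Rightarrow> ('e \<Rightarrow> 'v) \<Rightarrow> ('e \<Rightarrow> real) \<Rightarrow> ('v, 'e) gpoint set \<Rightarrow> bool" where
  "gopen V E src tgt len S \<longleftrightarrow> S \<subseteq> gpoints V E src tgt len \<and>
     (\<forall>s\<in>S. \<exists>\<epsilon>>0. \<forall>z\<in>gpoints V E src tgt len. gdist E src tgt len s z < \<epsilon> \<longrightarrow> z \<in> S)"

definition gclosure :: "'v set \<Rightarrow> 'e set \<Rightarrow> ('e \<Rightarrow> 'v) \<Rightarrow> ('e \<Rightarrow> 'v) \<Rightarrow> ('e \<Rightarrow> real) \<Rightarrow> ('v, 'e) gpoint set \<Rightarrow> ('v, 'e) gpoint set" where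
  "gclosure V E src tgt len S =
     {s \<in> gpoints V E src tgt len. \<forall>\<epsilon>>0. \<exists>z\<in>S. gdist E src tgt len s z < \<epsilon>}"

definition gboundary :: "'v set \<Rightarrow> 'e set \<Rightarrow> ('e \<Rightarrow> 'v) \<Rightarrow> ('e \<Rightarrow> 'v) \<Rightarrow> ('e \<Rightarrow> real) \<Rightarrow> ('v, 'e) gpoint set \<Rightarrow> ('v, 'e) gpoint set" where
  "gboundary V E src tgt len S =
     gclosure V E src tgt len S \<inter> gclosure V E src tgt len (gpoints V E src tgt len - S)"

definition gaussian_rv :: "'w measure \<Rightarrow> ('w \<Rightarrow> real) \<Rightarrow> bool" where
  "gaussian_rv M X \<longleftrightarrow> X \<in> borel_measurable M \<and>
     ((\<exists>\<mu>. AE \<omega> in M. X \<omega> = \<mu>) \<or>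
      (\<exists>\<mu> \<sigma>. 0 < \<sigma> \<and> distributed M lborel X (\<lambda>x. ennreal (normal_density \<mu> \<sigma> x))))"

definition lin_span_field :: "('p \<Rightarrow> 'w \<Rightarrow> real) \<Rightarrow> 'p set \<Rightarrow> ('w \<Rightarrow> real) set" where
  "lin_span_field u S =
     {Y. \<exists>(n::nat) (c::nat \<Rightarrow> real) z. (\<forall>i<n. z i \<in> S) \<and> Y = (\<lambda>\<omega>. \<Sum>i<n. c i * u (z i) \<omega>)}"

definition gaussian_random_field :: "'w measure \<Rightarrow> 'p set \<Rightarrow> ('p \<Rightarrow> 'w \<Rightarrow> real) \<Rightarrow> bool" where
  "gaussian_random_field M P u \<longleftrightarrow> prob_space M \<and>
     (\<forall>Y\<in>lin_span_field u P. gaussian_rv M Y)"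

definition L2_rv :: "'w measure \<Rightarrow> ('w \<Rightarrow> real) \<Rightarrow> bool" where
  "L2_rv M X \<longleftrightarrow> X \<in> borel_measurable M \<and> integrable M (\<lambda>\<omega>. (X \<omega>)\<^sup>2)"

definition Hspace :: "'w measure \<Rightarrow> ('p \<Rightarrow> 'w \<Rightarrow> real) \<Rightarrow> 'p set \<Rightarrow> ('w \<Rightarrow> real) set" where
  "Hspace M u S =
     {X. L2_rv M X \<and> (\<exists>Y. (\<forall>n. Y n \<in> lin_span_field u S) \<and>
          (\<lambda>n. integral\<^sup>L M (\<lambda>\<omega>. (X \<omega> - Y n \<omega>)\<^sup>2)) \<longlonglongrightarrow> 0)}"

definition Hplus :: "'w measure \<Rightarrow> 'v set \<Rightarrow> 'e set \<Rightarrow> ('e \<Rightarrow> 'v) \<Rightarrow> ('e \<Rightarrow> 'v) \<Rightarrow> ('e \<Rightarrow> real)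
    \<Rightarrow> (('v, 'e) gpoint \<Rightarrow> 'w \<Rightarrow> real) \<Rightarrow> ('v, 'e) gpoint set \<Rightarrow> ('w \<Rightarrow> real) set" where
  "Hplus M V E src tgt len u S = (\<Inter>\<epsilon>\<in>{0<..}. Hspace M u (gnbhd V E src tgt len S \<epsilon>))"

definition weak_deriv_at :: "'w measure \<Rightarrow> ('w \<Rightarrow> real) set \<Rightarrow> real \<Rightarrow> (real \<Rightarrow> 'w \<Rightarrow> real) \<Rightarrow> ('w \<Rightarrow> real) \<Rightarrow> real \<Rightarrow> bool" where
  "weak_deriv_at M H l v D t \<longleftrightarrow> D \<in> H \<and>
     (\<forall>w\<in>H. \<forall>tn. (\<forall>n. tn n \<in> {0..l} - {t}) \<and> tn \<longlonglongrightarrow> t \<longrightarrow>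
        (\<lambda>n. integral\<^sup>L M (\<lambda>\<omega>. w \<omega> * ((v (tn n) \<omega> - v t \<omega>) / (tn n - t))))
          \<longlonglongrightarrow> integral\<^sup>L M (\<lambda>\<omega>. w \<omega> * D \<omega>))"

definition weakly_continuous :: "'w measure \<Rightarrow> ('w \<Rightarrow> real) set \<Rightarrow> real \<Rightarrow> (real \<Rightarrow> 'w \<Rightarrow> real) \<Rightarrow> bool" where
  "weakly_continuous M H l v \<longleftrightarrow>
     (\<forall>w\<in>H. continuous_on {0..l} (\<lambda>t. integral\<^sup>L M (\<lambda>\<omega>. w \<omega> * v t \<omega>)))"

definition weak_deriv_family :: "'w measure \<Rightarrow> 'v set \<Rightarrow> 'e set \<Rightarrow> ('e \<Rightarrow> 'v) \<Rightarrow> ('e \<Rightarrow> 'v) \<Rightarrow> ('e \<Rightarrow> real)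
    \<Rightarrow> (('v, 'e) gpoint \<Rightarrow> 'w \<Rightarrow> real) \<Rightarrow> nat \<Rightarrow> 'e \<Rightarrow> (nat \<Rightarrow> real \<Rightarrow> 'w \<Rightarrow> real) \<Rightarrow> bool" where
  "weak_deriv_family M V E src tgt len u p e D \<longleftrightarrow>
     (\<forall>t\<in>{0..len e}. D 0 t = u (gpt src tgt len e t)) \<and>
     (\<forall>j<p. \<forall>t\<in>{0..len e}.
        weak_deriv_at M (Hspace M u (gpoints V E src tgt len)) (len e) (D j) (D (Suc j) t) t)"

definition differentiable_GRF :: "'w measure \<Rightarrow> 'v set \<Rightarrow> 'e set \<Rightarrow> ('e \<Rightarrow> 'v) \<Rightarrow> ('e \<Rightarrow> 'v) \<Rightarrow> ('e \<Rightarrow> real)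
    \<Rightarrow> (('v, 'e) gpoint \<Rightarrow> 'w \<Rightarrow> real) \<Rightarrow> nat \<Rightarrow> bool" where
  "differentiable_GRF M V E src tgt len u p \<longleftrightarrow>
     gaussian_random_field M (gpoints V E src tgt len) u \<and>
     (if p = 0 then
        (\<forall>s\<in>gpoints V E src tgt len. \<forall>\<epsilon>>0. \<exists>\<delta>>0. \<forall>z\<in>gpoints V E src tgt len.
           gdist E src tgt len s z < \<delta> \<longrightarrow>
           integral\<^sup>L M (\<lambda>\<omega>. (u z \<omega> - u s \<omega>)\<^sup>2) < \<epsilon>)
      else
        (\<forall>e\<in>E. \<exists>D. weak_deriv_family M V E src tgt len u p e D \<and>
           (\<forall>j\<le>p. weakly_continuous M (Hspace M u (gpoints V E src tgt len)) (len e) (D j))))"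

end

theory Submission
  imports Defs
begin


lemma L2_meas: "L2_rv M f \<Longrightarrow> f \<in> borel_measurable M" by (simp add: L2_rv_def)
lemma L2_sq: "L2_rv M f \<Longrightarrow> integrable M (\<lambda>x. (f x)\<^sup>2)" by (simp add: L2_rv_def)

lemma L2_prod_integrable:
  assumes "L2_rv M f" "L2_rv M g"
  shows "integrable M (\<lambda>x. f x * g x)"
proof (rule Bochner_Integration.integrable_bound)
  show "integrable M (\<lambda>x. (f x)\<^sup>2 + (g x)\<^sup>2)" using assms by (simp add: L2_rv_def)
  have [measurable]: "f \<in> borel_measurable M" "g \<in> borel_measurable M" using assms by (auto simp: L2_rv_def)
  show "(\<lambda>x. f x * g x) \<in> borel_measurable M" by measurable
  show "AE x in M. norm (f x * g x) \<le> norm ((f x)\<^sup>2 + (g x)\<^sup>2)"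
  proof (rule AE_I2)
    fix x
    have "0 \<le> (\<bar>f x\<bar> - \<bar>g x\<bar>)\<^sup>2" by simp
    also have "(\<bar>f x\<bar> - \<bar>g x\<bar>)\<^sup>2 = (f x)\<^sup>2 + (g x)\<^sup>2 - 2*(\<bar>f x\<bar> * \<bar>g x\<bar>)"
      by (simp add: power2_eq_square algebra_simps abs_mult_self_eq)
    finally have "\<bar>f x\<bar> * \<bar>g x\<bar> \<le> (f x)\<^sup>2 + (g x)\<^sup>2"
      using zero_le_power2[of "f x"] zero_le_power2[of "g x"] by linarith
    then show "norm (f x * g x) \<le> norm ((f x)\<^sup>2 + (g x)\<^sup>2)" by (simp add: abs_mult)
  qed
qed

lemma L2_lin:
  assumes "L2_rv M f" "L2_rv M g"
  shows "L2_rv M (\<lambda>x. a * f x + b * g x)"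
proof -
  have [measurable]: "f \<in> borel_measurable M" "g \<in> borel_measurable M" using assms by (auto simp: L2_rv_def)
  have m: "(\<lambda>x. a * f x + b * g x) \<in> borel_measurable M" by measurable
  have i: "integrable M (\<lambda>x. a\<^sup>2 * (f x)\<^sup>2 + b\<^sup>2 * (g x)\<^sup>2 + (2*a*b) * (f x * g x))"
    using assms L2_prod_integrable[OF assms] by (simp add: L2_rv_def)
  have "integrable M (\<lambda>x. (a * f x + b * g x)\<^sup>2)"
  proof -
    have "(\<lambda>x. (a * f x + b * g x)\<^sup>2) = (\<lambda>x. a\<^sup>2 * (f x)\<^sup>2 + b\<^sup>2 * (g x)\<^sup>2 + (2*a*b) * (f x * g x))"
      by (simp add: fun_eq_iff power2_eq_square algebra_simps)
    then show ?thesis using i by simp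
  qed
  then show ?thesis using m by (simp add: L2_rv_def)
qed

lemma L2_add: "L2_rv M f \<Longrightarrow> L2_rv M g \<Longrightarrow> L2_rv M (\<lambda>x. f x + g x)"
  using L2_lin[of M f g 1 1] by simp
lemma L2_diff: "L2_rv M f \<Longrightarrow> L2_rv M g \<Longrightarrow> L2_rv M (\<lambda>x. f x - g x)"
  using L2_lin[of M f g 1 "-1"] by simp
lemma L2_zero: "L2_rv M (\<lambda>x. 0)" by (simp add: L2_rv_def)

lemma L2_const: "finite_measure M \<Longrightarrow> L2_rv M (\<lambda>x. c)"
  by (simp add: L2_rv_def finite_measure.integrable_const)

lemma L2_expand:
  assumes "L2_rv M f" "L2_rv M g"
  shows "integral\<^sup>L M (\<lambda>x. (a * f x + b * g x)\<^sup>2) =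
     a\<^sup>2 * integral\<^sup>L M (\<lambda>x. (f x)\<^sup>2) + b\<^sup>2 * integral\<^sup>L M (\<lambda>x. (g x)\<^sup>2)
     + 2*a*b * integral\<^sup>L M (\<lambda>x. f x * g x)"
proof -
  have "integral\<^sup>L M (\<lambda>x. (a * f x + b * g x)\<^sup>2) =
        integral\<^sup>L M (\<lambda>x. a\<^sup>2 * (f x)\<^sup>2 + b\<^sup>2 * (g x)\<^sup>2 + (2*a*b) * (f x * g x))"
    by (rule Bochner_Integration.integral_cong) (simp_all add: power2_eq_square algebra_simps)
  also have "\<dots> = a\<^sup>2 * integral\<^sup>L M (\<lambda>x. (f x)\<^sup>2) + b\<^sup>2 * integral\<^sup>L M (\<lambda>x. (g x)\<^sup>2)
     + 2*a*b * integral\<^sup>L M (\<lambda>x. f x * g x)"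
    using assms L2_prod_integrable[OF assms] by (simp add: L2_rv_def)
  finally show ?thesis .
qed

lemma quad_nonneg_imp:
  fixes a b c :: real
  assumes "\<And>t. 0 \<le> a * t\<^sup>2 - 2 * b * t + c" "0 \<le> a"
  shows "b\<^sup>2 \<le> a * c"
proof (cases "a = 0")
  case True
  have "0 \<le> c" using assms(1)[of 0] by simp
  have "b = 0"
  proof (rule ccontr)
    assume b: "b \<noteq> 0"
    have "0 \<le> - 2 * b * ((c+1)/(2*b)) + c" using assms(1)[of "(c+1)/(2*b)"] True by simp
    also have "- 2 * b * ((c+1)/(2*b)) = -(c+1)" using b by (simp add: field_simps)
    finally show False by simp
  qed
  then show ?thesis using True \<open>0 \<le> c\<close> by simp
next
  case False
  then have a: "0 < a" using assms(2) by simp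
  have "0 \<le> a * (b/a)\<^sup>2 - 2 * b * (b/a) + c" by (rule assms(1))
  also have "\<dots> = c - b\<^sup>2 / a" using a by (simp add: power2_eq_square field_simps)
  finally show ?thesis using a by (simp add: field_simps)
qed

lemma L2_CS:
  assumes "L2_rv M f" "L2_rv M g"
  shows "(integral\<^sup>L M (\<lambda>x. f x * g x))\<^sup>2 \<le> integral\<^sup>L M (\<lambda>x. (g x)\<^sup>2) * integral\<^sup>L M (\<lambda>x. (f x)\<^sup>2)"
proof (rule quad_nonneg_imp)
  fix t
  have "0 \<le> integral\<^sup>L M (\<lambda>x. (1 * f x + (-t) * g x)\<^sup>2)" by simp
  also have "\<dots> = integral\<^sup>L M (\<lambda>x. (g x)\<^sup>2) * t\<^sup>2 - 2 * integral\<^sup>L M (\<lambda>x. f x * g x) * t + integral\<^sup>L M (\<lambda>x. (f x)\<^sup>2)"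
    by (subst L2_expand[OF assms]) (simp add: algebra_simps)
  finally show "0 \<le> integral\<^sup>L M (\<lambda>x. (g x)\<^sup>2) * t\<^sup>2 - 2 * integral\<^sup>L M (\<lambda>x. f x * g x) * t + integral\<^sup>L M (\<lambda>x. (f x)\<^sup>2)" .
qed simp



lemma sum_lessThan_split:
  fixes F :: "nat \<Rightarrow> 'a::comm_monoid_add"
  shows "(\<Sum>i<n1+n2. F i) = (\<Sum>i<n1. F i) + (\<Sum>i<n2. F (n1+i))"
  by (induct n2) (simp_all add: add.assoc)

lemma lin_span_lin:
  assumes "Y1 \<in> lin_span_field u S" "Y2 \<in> lin_span_field u S"
  shows "(\<lambda>\<omega>. a * Y1 \<omega> + b * Y2 \<omega>) \<in> lin_span_field u S"
proof -
  obtain n1 :: nat and c1 z1 where 1: "\<forall>i<n1. z1 i \<in> S" "Y1 = (\<lambda>\<omega>. \<Sum>i<n1. c1 i * u (z1 i) \<omega>)"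
    using assms(1) unfolding lin_span_field_def by blast
  obtain n2 :: nat and c2 z2 where 2: "\<forall>i<n2. z2 i \<in> S" "Y2 = (\<lambda>\<omega>. \<Sum>i<n2. c2 i * u (z2 i) \<omega>)"
    using assms(2) unfolding lin_span_field_def by blast
  define c where "c i = (if i < n1 then a * c1 i else b * c2 (i - n1))" for i
  define z where "z i = (if i < n1 then z1 i else z2 (i - n1))" for i
  have zS: "\<forall>i<n1+n2. z i \<in> S" using 1 2 by (auto simp: z_def)
  have "(\<lambda>\<omega>. a * Y1 \<omega> + b * Y2 \<omega>) = (\<lambda>\<omega>. \<Sum>i<n1+n2. c i * u (z i) \<omega>)"
  proof
    fix \<omega>
    have "(\<Sum>i<n1+n2. c i * u (z i) \<omega>) = (\<Sum>i<n1. c i * u (z i) \<omega>) + (\<Sum>i<n2. c (n1+i) * u (z (n1+i)) \<omega>)"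
      by (rule sum_lessThan_split)
    also have "(\<Sum>i<n1. c i * u (z i) \<omega>) = a * Y1 \<omega>"
      by (simp add: 1 sum_distrib_left c_def z_def mult.assoc)
    also have "(\<Sum>i<n2. c (n1+i) * u (z (n1+i)) \<omega>) = b * Y2 \<omega>"
      by (simp add: 2 sum_distrib_left c_def z_def mult.assoc)
    finally show "a * Y1 \<omega> + b * Y2 \<omega> = (\<Sum>i<n1+n2. c i * u (z i) \<omega>)" by simp
  qed
  then show ?thesis using zS unfolding lin_span_field_def by blast
qed

lemma lin_span_mono: "S \<subseteq> T \<Longrightarrow> lin_span_field u S \<subseteq> lin_span_field u T"
  unfolding lin_span_field_def by blast

lemma lin_span_single: "z \<in> S \<Longrightarrow> u z \<in> lin_span_field u S"
  unfolding lin_span_field_def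
  by (rule CollectI, rule exI[of _ 1], rule exI[of _ "\<lambda>_. 1"], rule exI[of _ "\<lambda>_. z"]) auto

lemma lin_span_zero: "(\<lambda>\<omega>. 0) \<in> lin_span_field u S"
  unfolding lin_span_field_def by (rule CollectI, rule exI[of _ 0]) auto

lemma lin_span_L2:
  assumes "\<forall>z\<in>S. L2_rv M (u z)" "Y \<in> lin_span_field u S"
  shows "L2_rv M Y"
proof -
  obtain n :: nat and c z where 1: "\<forall>i<n. z i \<in> S" "Y = (\<lambda>\<omega>. \<Sum>i<n. c i * u (z i) \<omega>)"
    using assms(2) unfolding lin_span_field_def by blast
  have "L2_rv M (\<lambda>\<omega>. \<Sum>i<m. c i * u (z i) \<omega>)" if "m \<le> n" for m
    using that
  proof (induct m)
    case 0 then show ?case by (simp add: L2_zero)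
  next
    case (Suc m)
    then have "L2_rv M (\<lambda>\<omega>. 1 * (\<Sum>i<m. c i * u (z i) \<omega>) + c m * u (z m) \<omega>)"
      using 1 assms(1) by (intro L2_lin) auto
    then show ?case by simp
  qed
  then show ?thesis using 1 by simp
qed

lemma Hspace_L2: "X \<in> Hspace M u S \<Longrightarrow> L2_rv M X" by (simp add: Hspace_def)

lemma Hspace_mono: "S \<subseteq> T \<Longrightarrow> Hspace M u S \<subseteq> Hspace M u T"
  unfolding Hspace_def using lin_span_mono by blast

lemma sq_le_2: "((a::real) * p + b * q)\<^sup>2 \<le> 2 * a\<^sup>2 * p\<^sup>2 + 2 * b\<^sup>2 * q\<^sup>2"
proof -
  have "(a * p + b * q)\<^sup>2 + (a * p - b * q)\<^sup>2 = 2 * a\<^sup>2 * p\<^sup>2 + 2 * b\<^sup>2 * q\<^sup>2"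
    by (simp add: power2_eq_square algebra_simps)
  moreover have "0 \<le> (a * p - b * q)\<^sup>2" by simp
  ultimately show ?thesis by linarith
qed

lemma int_sq_le_2:
  assumes "L2_rv M P" "L2_rv M Q"
  shows "integral\<^sup>L M (\<lambda>x. (a * P x + b * Q x)\<^sup>2) \<le>
     2 * a\<^sup>2 * integral\<^sup>L M (\<lambda>x. (P x)\<^sup>2) + 2 * b\<^sup>2 * integral\<^sup>L M (\<lambda>x. (Q x)\<^sup>2)"
proof -
  have "integral\<^sup>L M (\<lambda>x. (a * P x + b * Q x)\<^sup>2) \<le> integral\<^sup>L M (\<lambda>x. 2 * a\<^sup>2 * (P x)\<^sup>2 + 2 * b\<^sup>2 * (Q x)\<^sup>2)"
    using assms L2_lin[OF assms, of a b] by (intro integral_mono) (auto simp: L2_rv_def sq_le_2)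
  also have "\<dots> = 2 * a\<^sup>2 * integral\<^sup>L M (\<lambda>x. (P x)\<^sup>2) + 2 * b\<^sup>2 * integral\<^sup>L M (\<lambda>x. (Q x)\<^sup>2)"
    using assms by (simp add: L2_rv_def)
  finally show ?thesis .
qed

lemma Hspace_lin:
  assumes U: "\<forall>z\<in>S. L2_rv M (u z)" and X: "X \<in> Hspace M u S" and Y: "Y \<in> Hspace M u S"
  shows "(\<lambda>\<omega>. a * X \<omega> + b * Y \<omega>) \<in> Hspace M u S"
proof -
  obtain YX where YX: "\<forall>n. YX n \<in> lin_span_field u S" "(\<lambda>n. integral\<^sup>L M (\<lambda>\<omega>. (X \<omega> - YX n \<omega>)\<^sup>2)) \<longlonglongrightarrow> 0"
    using X by (auto simp: Hspace_def)
  obtain YY where YY: "\<forall>n. YY n \<in> lin_span_field u S" "(\<lambda>n. integral\<^sup>L M (\<lambda>\<omega>. (Y \<omega> - YY n \<omega>)\<^sup>2)) \<longlonglongrightarrow> 0"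
    using Y by (auto simp: Hspace_def)
  have LX: "L2_rv M X" and LY: "L2_rv M Y" using X Y by (auto simp: Hspace_def)
  define Z where "Z n = (\<lambda>\<omega>. a * YX n \<omega> + b * YY n \<omega>)" for n
  have Zs: "\<forall>n. Z n \<in> lin_span_field u S" using YX YY by (auto simp: Z_def intro: lin_span_lin)
  have LYX: "L2_rv M (YX n)" "L2_rv M (YY n)" for n using YX YY lin_span_L2[OF U] by auto
  have bound: "integral\<^sup>L M (\<lambda>\<omega>. ((a * X \<omega> + b * Y \<omega>) - Z n \<omega>)\<^sup>2) \<le>
      2 * a\<^sup>2 * integral\<^sup>L M (\<lambda>\<omega>. (X \<omega> - YX n \<omega>)\<^sup>2) + 2 * b\<^sup>2 * integral\<^sup>L M (\<lambda>\<omega>. (Y \<omega> - YY n \<omega>)\<^sup>2)" for n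
  proof -
    have eq: "(\<lambda>\<omega>. ((a * X \<omega> + b * Y \<omega>) - Z n \<omega>)\<^sup>2) = (\<lambda>\<omega>. (a * (X \<omega> - YX n \<omega>) + b * (Y \<omega> - YY n \<omega>))\<^sup>2)"
      by (simp add: Z_def algebra_simps)
    show ?thesis unfolding eq by (rule int_sq_le_2[OF L2_diff[OF LX LYX(1)] L2_diff[OF LY LYX(2)]])
  qed
  have lim: "(\<lambda>n. integral\<^sup>L M (\<lambda>\<omega>. ((a * X \<omega> + b * Y \<omega>) - Z n \<omega>)\<^sup>2)) \<longlonglongrightarrow> 0"
  proof (rule tendsto_sandwich[OF _ _ tendsto_const])
    show "\<forall>\<^sub>F n in sequentially. 0 \<le> integral\<^sup>L M (\<lambda>\<omega>. ((a * X \<omega> + b * Y \<omega>) - Z n \<omega>)\<^sup>2)" by simp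
    show "\<forall>\<^sub>F n in sequentially. integral\<^sup>L M (\<lambda>\<omega>. ((a * X \<omega> + b * Y \<omega>) - Z n \<omega>)\<^sup>2) \<le>
      2 * a\<^sup>2 * integral\<^sup>L M (\<lambda>\<omega>. (X \<omega> - YX n \<omega>)\<^sup>2) + 2 * b\<^sup>2 * integral\<^sup>L M (\<lambda>\<omega>. (Y \<omega> - YY n \<omega>)\<^sup>2)"
      using bound by simp
    show "(\<lambda>n. 2 * a\<^sup>2 * integral\<^sup>L M (\<lambda>\<omega>. (X \<omega> - YX n \<omega>)\<^sup>2) + 2 * b\<^sup>2 * integral\<^sup>L M (\<lambda>\<omega>. (Y \<omega> - YY n \<omega>)\<^sup>2)) \<longlonglongrightarrow> 0"
      using tendsto_add[OF tendsto_mult_right_zero[OF YX(2)] tendsto_mult_right_zero[OF YY(2)]] by simp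
  qed
  have "L2_rv M (\<lambda>\<omega>. a * X \<omega> + b * Y \<omega>)" by (rule L2_lin[OF LX LY])
  then show ?thesis unfolding Hspace_def using Zs lim by blast
qed

lemma Hspace_single: "z \<in> S \<Longrightarrow> L2_rv M (u z) \<Longrightarrow> u z \<in> Hspace M u S"
  unfolding Hspace_def using lin_span_single[of z S u] by (auto intro!: exI[of _ "\<lambda>_. u z"])



lemma inner_null:
  assumes W: "L2_rv M w" and Dn: "\<And>n. L2_rv M (Dn n)"
    and lim: "(\<lambda>n. integral\<^sup>L M (\<lambda>x. (Dn n x)\<^sup>2)) \<longlonglongrightarrow> 0"
  shows "(\<lambda>n. integral\<^sup>L M (\<lambda>x. w x * Dn n x)) \<longlonglongrightarrow> 0"
proof (rule Lim_null_comparison)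
  let ?b = "\<lambda>n. sqrt (integral\<^sup>L M (\<lambda>x. (Dn n x)\<^sup>2) * integral\<^sup>L M (\<lambda>x. (w x)\<^sup>2))"
  show "\<forall>\<^sub>F n in sequentially. norm (integral\<^sup>L M (\<lambda>x. w x * Dn n x)) \<le> ?b n"
  proof (rule always_eventually, rule allI)
    fix n
    have "(integral\<^sup>L M (\<lambda>x. w x * Dn n x))\<^sup>2 \<le> integral\<^sup>L M (\<lambda>x. (Dn n x)\<^sup>2) * integral\<^sup>L M (\<lambda>x. (w x)\<^sup>2)"
      by (rule L2_CS[OF W Dn])
    then show "norm (integral\<^sup>L M (\<lambda>x. w x * Dn n x)) \<le> ?b n"
      by (simp add: real_le_rsqrt)
  qed
  show "?b \<longlonglongrightarrow> 0"
    using tendsto_real_sqrt[OF tendsto_mult[OF lim tendsto_const]] by simp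
qed

lemma inner_conv:
  assumes W: "L2_rv M w" and X: "L2_rv M X" and Xn: "\<And>n. L2_rv M (Xn n)"
    and lim: "(\<lambda>n. integral\<^sup>L M (\<lambda>x. (Xn n x - X x)\<^sup>2)) \<longlonglongrightarrow> 0"
  shows "(\<lambda>n. integral\<^sup>L M (\<lambda>x. w x * Xn n x)) \<longlonglongrightarrow> integral\<^sup>L M (\<lambda>x. w x * X x)"
proof -
  have "(\<lambda>n. integral\<^sup>L M (\<lambda>x. w x * (Xn n x - X x))) \<longlonglongrightarrow> 0"
    by (rule inner_null[OF W L2_diff[OF Xn X] lim])
  moreover have "integral\<^sup>L M (\<lambda>x. w x * (Xn n x - X x)) =
      integral\<^sup>L M (\<lambda>x. w x * Xn n x) - integral\<^sup>L M (\<lambda>x. w x * X x)" for n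
    using L2_prod_integrable[OF W Xn] L2_prod_integrable[OF W X]
    by (simp add: right_diff_distrib)
  ultimately have "(\<lambda>n. integral\<^sup>L M (\<lambda>x. w x * Xn n x) - integral\<^sup>L M (\<lambda>x. w x * X x)) \<longlonglongrightarrow> 0"
    by simp
  then show ?thesis by (simp add: LIM_zero_iff)
qed

lemma norm_conv:
  assumes X: "L2_rv M X" and Xn: "\<And>n. L2_rv M (Xn n)"
    and lim: "(\<lambda>n. integral\<^sup>L M (\<lambda>x. (Xn n x - X x)\<^sup>2)) \<longlonglongrightarrow> 0"
  shows "(\<lambda>n. integral\<^sup>L M (\<lambda>x. (Xn n x)\<^sup>2)) \<longlonglongrightarrow> integral\<^sup>L M (\<lambda>x. (X x)\<^sup>2)"
proof -
  have D: "L2_rv M (\<lambda>x. Xn n x - X x)" for n by (rule L2_diff[OF Xn X])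
  have eq: "integral\<^sup>L M (\<lambda>x. (Xn n x)\<^sup>2) = integral\<^sup>L M (\<lambda>x. (X x)\<^sup>2) + integral\<^sup>L M (\<lambda>x. (Xn n x - X x)\<^sup>2)
      + 2 * integral\<^sup>L M (\<lambda>x. X x * (Xn n x - X x))" for n
    using L2_expand[OF X D[of n], of 1 1] by simp
  have "(\<lambda>n. integral\<^sup>L M (\<lambda>x. (X x)\<^sup>2) + integral\<^sup>L M (\<lambda>x. (Xn n x - X x)\<^sup>2)
      + 2 * integral\<^sup>L M (\<lambda>x. X x * (Xn n x - X x))) \<longlonglongrightarrow> integral\<^sup>L M (\<lambda>x. (X x)\<^sup>2) + 0 + 2 * 0"
    by (intro tendsto_intros lim inner_null[OF X D lim])
  then show ?thesis unfolding eq by simp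
qed



lemma L2_complete:
  assumes P: "prob_space M" and L: "\<And>n. L2_rv M (f n)"
    and C: "\<And>m n. integral\<^sup>L M (\<lambda>x. (f m x - f n x)\<^sup>2) \<le> 2*(1/4)^m + 2*(1/4)^n"
  shows "\<exists>g. L2_rv M g \<and> (\<lambda>n. integral\<^sup>L M (\<lambda>x. (f n x - g x)\<^sup>2)) \<longlonglongrightarrow> 0"
proof -
  interpret prob_space M by fact
  have fm[measurable]: "f n \<in> borel_measurable M" for n using L by (simp add: L2_rv_def)
  define h where "h k x = \<bar>f (Suc k) x - f k x\<bar>" for k x
  have hm[measurable]: "h k \<in> borel_measurable M" for k unfolding h_def by measurable
  have one: "L2_rv M (\<lambda>x. 1)" by (rule L2_const) (rule finite_measure_axioms)
  have hL2: "L2_rv M (h k)" for k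
  proof -
    have "L2_rv M (\<lambda>x. f (Suc k) x - f k x)" by (rule L2_diff[OF L L])
    then show ?thesis by (simp add: L2_rv_def h_def)
  qed
  have hint: "integrable M (h k)" for k
    using L2_prod_integrable[OF hL2 one] by simp
  have hbound: "integral\<^sup>L M (h k) \<le> 2 * (1/2)^k" for k
  proof -
    have "(integral\<^sup>L M (\<lambda>x. h k x * 1))\<^sup>2 \<le> integral\<^sup>L M (\<lambda>x. 1\<^sup>2) * integral\<^sup>L M (\<lambda>x. (h k x)\<^sup>2)"
      by (rule L2_CS[OF hL2 one])
    also have "integral\<^sup>L M (\<lambda>x. (h k x)\<^sup>2) = integral\<^sup>L M (\<lambda>x. (f (Suc k) x - f k x)\<^sup>2)"
      by (simp add: h_def)
    also have "\<dots> \<le> 2*(1/4)^(Suc k) + 2*(1/4)^k" by (rule C)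
    also have "\<dots> \<le> (2 * (1/2)^k)\<^sup>2" by (simp add: power2_eq_square power_mult_distrib[symmetric] field_simps)
    finally have "(integral\<^sup>L M (h k))\<^sup>2 \<le> (2 * (1/2)^k)\<^sup>2" by (simp add: prob_space)
    then show ?thesis by (rule power2_le_imp_le) simp
  qed
  have hnn: "0 \<le> h k x" for k x by (simp add: h_def)
  have "(\<integral>\<^sup>+ x. (\<Sum>k. ennreal (h k x)) \<partial>M) = (\<Sum>k. (\<integral>\<^sup>+ x. ennreal (h k x) \<partial>M))"
    by (rule nn_integral_suminf) measurable
  also have "\<dots> = (\<Sum>k. ennreal (integral\<^sup>L M (h k)))"
    by (rule arg_cong[where f=suminf], rule ext, rule nn_integral_eq_integral[OF hint]) (simp add: hnn)
  also have "\<dots> \<le> (\<Sum>k. ennreal (2 * (1/2)^k))"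
    by (rule suminf_le[OF _ summableI summableI]) (rule ennreal_leI[OF hbound])
  finally have le: "(\<integral>\<^sup>+ x. (\<Sum>k. ennreal (h k x)) \<partial>M) \<le> (\<Sum>k. ennreal (2 * (1/2)^k))" .
  have S: "(\<Sum>k. ennreal (2 * (1/2::real)^k)) \<noteq> \<top>"
  proof -
    have sg: "summable (\<lambda>k. (1/2::real)^k)" by (rule summable_geometric) simp
    show ?thesis by (rule ennreal_suminf_neq_top[OF summable_mult[OF sg, of 2]]) simp
  qed
  have fin: "(\<integral>\<^sup>+ x. (\<Sum>k. ennreal (h k x)) \<partial>M) \<noteq> \<infinity>"
  proof
    assume "(\<integral>\<^sup>+ x. (\<Sum>k. ennreal (h k x)) \<partial>M) = \<infinity>"
    with le have "\<top> \<le> (\<Sum>k. ennreal (2 * (1/2::real)^k))" by simp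
    with S show False by (simp add: top_unique)
  qed
  have "AE x in M. (\<Sum>k. ennreal (h k x)) \<noteq> \<infinity>"
    by (rule nn_integral_noteq_infinite[OF _ fin]) measurable
  then have conv: "AE x in M. (\<lambda>n. f n x) \<longlonglongrightarrow> lim (\<lambda>n. f n x)"
  proof (rule AE_mp, intro AE_I2 impI)
    fix x assume "(\<Sum>k. ennreal (h k x)) \<noteq> \<infinity>"
    then have "summable (\<lambda>k. h k x)" by (intro summable_suminf_not_top) (simp_all add: hnn)
    then have "summable (\<lambda>k. f (Suc k) x - f k x)" unfolding h_def by (rule summable_rabs_cancel)
    then have "convergent (\<lambda>n. \<Sum>k<n. f (Suc k) x - f k x)" by (simp add: summable_iff_convergent)
    then have "convergent (\<lambda>n. f 0 x + (\<Sum>k<n. f (Suc k) x - f k x))"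
      by (intro convergent_add convergent_const)
    then have "convergent (\<lambda>n. f n x)" using sum_lessThan_telescope[of "\<lambda>k. f k x"] by simp
    then show "(\<lambda>n. f n x) \<longlonglongrightarrow> lim (\<lambda>n. f n x)" by (simp add: convergent_LIMSEQ_iff)
  qed
  define g where "g x = lim (\<lambda>n. f n x)" for x
  have gm[measurable]: "g \<in> borel_measurable M" unfolding g_def by measurable
  have key: "(\<integral>\<^sup>+ x. ennreal ((f n x - g x)\<^sup>2) \<partial>M) \<le> ennreal (4 * (1/4)^n)" for n
  proof -
    have "(\<integral>\<^sup>+ x. ennreal ((f n x - g x)\<^sup>2) \<partial>M) =
          (\<integral>\<^sup>+ x. liminf (\<lambda>k. ennreal ((f n x - f k x)\<^sup>2)) \<partial>M)"
    proof (rule nn_integral_cong_AE)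
      show "AE x in M. ennreal ((f n x - g x)\<^sup>2) = liminf (\<lambda>k. ennreal ((f n x - f k x)\<^sup>2))"
        using conv
      proof (rule AE_mp, intro AE_I2 impI)
        fix x assume "(\<lambda>k. f k x) \<longlonglongrightarrow> lim (\<lambda>k. f k x)"
        then have T: "(\<lambda>k. ennreal ((f n x - f k x)\<^sup>2)) \<longlonglongrightarrow> ennreal ((f n x - g x)\<^sup>2)"
          unfolding g_def by (intro tendsto_intros) auto
        show "ennreal ((f n x - g x)\<^sup>2) = liminf (\<lambda>k. ennreal ((f n x - f k x)\<^sup>2))"
          using lim_imp_Liminf[OF _ T] by simp
      qed
    qed
    also have "\<dots> \<le> liminf (\<lambda>k. \<integral>\<^sup>+ x. ennreal ((f n x - f k x)\<^sup>2) \<partial>M)"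
      by (rule nn_integral_liminf) measurable
    also have "\<dots> \<le> liminf (\<lambda>k. ennreal (4 * (1/4)^n))"
    proof (rule Liminf_mono, rule eventually_sequentiallyI[of n])
      fix k assume "n \<le> k"
      have i: "integrable M (\<lambda>x. (f n x - f k x)\<^sup>2)" using L2_diff[OF L L] by (simp add: L2_rv_def)
      have "(\<integral>\<^sup>+ x. ennreal ((f n x - f k x)\<^sup>2) \<partial>M) = ennreal (integral\<^sup>L M (\<lambda>x. (f n x - f k x)\<^sup>2))"
        by (rule nn_integral_eq_integral[OF i]) simp
      also have "\<dots> \<le> ennreal (4 * (1/4)^n)"
      proof (rule ennreal_leI)
        have "(1/4::real)^k \<le> (1/4)^n" using \<open>n \<le> k\<close> by (intro power_decreasing) auto
        then show "integral\<^sup>L M (\<lambda>x. (f n x - f k x)\<^sup>2) \<le> 4 * (1/4)^n" using C[of n k] by linarith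
      qed
      finally show "(\<integral>\<^sup>+ x. ennreal ((f n x - f k x)\<^sup>2) \<partial>M) \<le> ennreal (4 * (1/4)^n)" .
    qed
    also have "\<dots> = ennreal (4 * (1/4)^n)" by (simp add: Liminf_const)
    finally show ?thesis .
  qed
  have gi: "integrable M (\<lambda>x. (f n x - g x)\<^sup>2)" for n
  proof -
    have "(\<integral>\<^sup>+ x. ennreal (norm ((f n x - g x)\<^sup>2)) \<partial>M) < \<infinity>"
      using key[of n] by (simp add: le_less_trans[OF _ ennreal_less_top])
    then show ?thesis by (simp add: integrable_iff_bounded)
  qed
  have gb: "integral\<^sup>L M (\<lambda>x. (f n x - g x)\<^sup>2) \<le> 4 * (1/4)^n" for n
  proof -
    have "integral\<^sup>L M (\<lambda>x. (f n x - g x)\<^sup>2) = enn2real (\<integral>\<^sup>+ x. ennreal ((f n x - g x)\<^sup>2) \<partial>M)"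
      by (rule integral_eq_nn_integral) auto
    also have "\<dots> \<le> enn2real (ennreal (4 * (1/4)^n))"
      by (rule enn2real_mono[OF key]) simp
    also have "\<dots> = 4 * (1/4)^n" by simp
    finally show ?thesis .
  qed
  have "L2_rv M (\<lambda>x. f 0 x - g x)" using gi[of 0] by (simp add: L2_rv_def)
  from L2_diff[OF L[of 0] this] have gL: "L2_rv M g" by simp
  have "(\<lambda>n. integral\<^sup>L M (\<lambda>x. (f n x - g x)\<^sup>2)) \<longlonglongrightarrow> 0"
  proof (rule tendsto_sandwich[OF _ _ tendsto_const])
    show "\<forall>\<^sub>F n in sequentially. 0 \<le> integral\<^sup>L M (\<lambda>x. (f n x - g x)\<^sup>2)" by simp
    show "\<forall>\<^sub>F n in sequentially. integral\<^sup>L M (\<lambda>x. (f n x - g x)\<^sup>2) \<le> 4 * (1/4)^n" using gb by simp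
    show "(\<lambda>n. 4 * (1/4::real)^n) \<longlonglongrightarrow> 0"
      by (intro tendsto_mult_right_zero LIMSEQ_power_zero) simp
  qed
  then show ?thesis using gL by blast
qed



lemma aux_lin: "(a::real) < x \<Longrightarrow> b < y \<Longrightarrow> d \<le> c \<Longrightarrow> 2*a + 2*b - 4*c \<le> 2*x + 2*y - 4*d"
  by linarith

lemma aux2:
  fixes d R t K I :: real
  assumes "d \<le> R + t\<^sup>2 * K - 2 * t * I" "R \<le> d"
  shows "0 \<le> K * t\<^sup>2 - 2 * I * t + 0"
proof -
  have "K * t\<^sup>2 = t\<^sup>2 * K" "2 * I * t = 2 * t * I" by (simp_all add: mult_ac)
  then show ?thesis using assms by linarith
qed

lemma weak_closed:
  assumes P: "prob_space M" and U: "\<forall>z\<in>G. L2_rv M (u z)" and AG: "A \<subseteq> G"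
    and DH: "D \<in> Hspace M u G"
    and Q: "eventually (\<lambda>n. q n \<in> Hspace M u A) sequentially"
    and W: "\<forall>w\<in>Hspace M u G. (\<lambda>n. integral\<^sup>L M (\<lambda>\<omega>. w \<omega> * q n \<omega>)) \<longlonglongrightarrow> integral\<^sup>L M (\<lambda>\<omega>. w \<omega> * D \<omega>)"
  shows "D \<in> Hspace M u A"
proof -
  have UA: "\<forall>z\<in>A. L2_rv M (u z)" using U AG by auto
  have LD: "L2_rv M D" using DH by (rule Hspace_L2)
  have LS: "y \<in> lin_span_field u A \<Longrightarrow> L2_rv M y" for y by (rule lin_span_L2[OF UA])
  define J where "J y = integral\<^sup>L M (\<lambda>\<omega>. (D \<omega> - y \<omega>)\<^sup>2)" for y
  define d where "d = Inf (J ` lin_span_field u A)"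
  have bdd: "bdd_below (J ` lin_span_field u A)"
    by (rule bdd_belowI[of _ 0]) (auto simp: J_def)
  have ne: "J ` lin_span_field u A \<noteq> {}" using lin_span_zero[of u A] by blast
  have dle: "y \<in> lin_span_field u A \<Longrightarrow> d \<le> J y" for y
    unfolding d_def by (rule cInf_lower[OF _ bdd]) simp
  have "\<exists>y\<in>lin_span_field u A. J y < d + (1/4)^n" for n :: nat
  proof -
    have "Inf (J ` lin_span_field u A) < d + (1/4)^n" unfolding d_def by simp
    from cInf_lessD[OF ne this] show ?thesis by blast
  qed
  then obtain y where yS: "\<And>n. y n \<in> lin_span_field u A" and yJ: "\<And>n. J (y n) < d + (1/4)^n"
    by metis
  have Ly: "L2_rv M (y n)" for n using LS yS by blast
  have cauchy: "integral\<^sup>L M (\<lambda>x. (y m x - y n x)\<^sup>2) \<le> 2*(1/4)^m + 2*(1/4)^n" for m n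
  proof -
    define mid where "mid = (\<lambda>\<omega>. (1/2) * y m \<omega> + (1/2) * y n \<omega>)"
    have midS: "mid \<in> lin_span_field u A" unfolding mid_def by (intro lin_span_lin yS)
    have Lm: "L2_rv M mid" using LS midS by blast
    have i1: "integrable M (\<lambda>\<omega>. (D \<omega> - y m \<omega>)\<^sup>2)" using L2_diff[OF LD Ly] by (simp add: L2_rv_def)
    have i2: "integrable M (\<lambda>\<omega>. (D \<omega> - y n \<omega>)\<^sup>2)" using L2_diff[OF LD Ly] by (simp add: L2_rv_def)
    have i3: "integrable M (\<lambda>\<omega>. (D \<omega> - mid \<omega>)\<^sup>2)" using L2_diff[OF LD Lm] by (simp add: L2_rv_def)
    have eq: "(\<lambda>\<omega>. (y m \<omega> - y n \<omega>)\<^sup>2) =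
       (\<lambda>\<omega>. 2 * (D \<omega> - y m \<omega>)\<^sup>2 + 2 * (D \<omega> - y n \<omega>)\<^sup>2 - 4 * (D \<omega> - mid \<omega>)\<^sup>2)"
      by (simp add: fun_eq_iff mid_def power2_eq_square algebra_simps)
    have "integral\<^sup>L M (\<lambda>x. (y m x - y n x)\<^sup>2) = 2 * J (y m) + 2 * J (y n) - 4 * J mid"
      unfolding eq J_def using i1 i2 i3 by simp
    also have "\<dots> \<le> 2 * (d + (1/4)^m) + 2 * (d + (1/4)^n) - 4 * d"
      by (rule aux_lin[OF yJ[of m] yJ[of n] dle[OF midS]])
    finally show ?thesis by simp
  qed
  obtain g where Lg: "L2_rv M g" and gl: "(\<lambda>n. integral\<^sup>L M (\<lambda>x. (y n x - g x)\<^sup>2)) \<longlonglongrightarrow> 0"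
    using L2_complete[OF P Ly cauchy] by blast
  define r where "r = (\<lambda>\<omega>. D \<omega> - g \<omega>)"
  have Lr: "L2_rv M r" unfolding r_def by (rule L2_diff[OF LD Lg])
  have gl': "(\<lambda>n. integral\<^sup>L M (\<lambda>x. (g x - y n x)\<^sup>2)) \<longlonglongrightarrow> 0"
    using gl by (simp add: power2_commute)
  have conv1: "(\<lambda>n. J (y n)) \<longlonglongrightarrow> integral\<^sup>L M (\<lambda>x. (r x)\<^sup>2)"
  proof -
    have "(\<lambda>n. integral\<^sup>L M (\<lambda>x. ((D x - y n x) - r x)\<^sup>2)) \<longlonglongrightarrow> 0"
      using gl by (simp add: r_def power2_commute)
    from norm_conv[OF Lr L2_diff[OF LD Ly] this] show ?thesis by (simp add: J_def)
  qed
  have rle: "integral\<^sup>L M (\<lambda>x. (r x)\<^sup>2) \<le> d"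
  proof (rule LIMSEQ_le[OF conv1])
    show "(\<lambda>n. d + (1/4::real)^n) \<longlonglongrightarrow> d"
      using tendsto_add[OF tendsto_const LIMSEQ_power_zero[of "1/4::real"]] by simp
    show "\<exists>N. \<forall>n\<ge>N. J (y n) \<le> d + (1/4)^n" using yJ less_imp_le by blast
  qed
  have orth0: "integral\<^sup>L M (\<lambda>\<omega>. r \<omega> * k \<omega>) = 0" if kS: "k \<in> lin_span_field u A" for k
  proof -
    have Lk: "L2_rv M k" using LS kS by blast
    have ge: "d \<le> integral\<^sup>L M (\<lambda>x. (1 * r x + (-t) * k x)\<^sup>2)" for t
    proof -
      have L1: "L2_rv M (\<lambda>x. 1 * r x + (-t) * k x)" by (rule L2_lin[OF Lr Lk])
      have "(\<lambda>n. integral\<^sup>L M (\<lambda>x. ((D x - (1 * y n x + t * k x)) - (1 * r x + (-t) * k x))\<^sup>2)) \<longlonglongrightarrow> 0"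
        using gl by (simp add: r_def power2_commute)
      from norm_conv[OF L1 L2_diff[OF LD L2_lin[OF Ly Lk]] this]
      have "(\<lambda>n. J (\<lambda>x. 1 * y n x + t * k x)) \<longlonglongrightarrow> integral\<^sup>L M (\<lambda>x. (1 * r x + (-t) * k x)\<^sup>2)"
        by (simp add: J_def)
      moreover have "d \<le> J (\<lambda>x. 1 * y n x + t * k x)" for n
        by (rule dle, rule lin_span_lin[OF yS kS])
      ultimately show ?thesis by (intro LIMSEQ_le_const) auto
    qed
    have "0 \<le> integral\<^sup>L M (\<lambda>x. (k x)\<^sup>2) * t\<^sup>2 - 2 * integral\<^sup>L M (\<lambda>x. r x * k x) * t + 0" for t
    proof -
      have "d \<le> integral\<^sup>L M (\<lambda>x. (r x)\<^sup>2) + t\<^sup>2 * integral\<^sup>L M (\<lambda>x. (k x)\<^sup>2) - 2 * t * integral\<^sup>L M (\<lambda>x. r x * k x)"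
        using ge[of t] L2_expand[OF Lr Lk, of 1 "-t"] by simp
      from aux2[OF this rle] show ?thesis .
    qed
    from quad_nonneg_imp[OF this] have "(integral\<^sup>L M (\<lambda>x. r x * k x))\<^sup>2 \<le> 0" by simp
    then show ?thesis by simp
  qed
  have orth: "integral\<^sup>L M (\<lambda>\<omega>. r \<omega> * k \<omega>) = 0" if kH: "k \<in> Hspace M u A" for k
  proof -
    obtain Y where YS: "\<forall>n. Y n \<in> lin_span_field u A"
      and Yl: "(\<lambda>n. integral\<^sup>L M (\<lambda>\<omega>. (k \<omega> - Y n \<omega>)\<^sup>2)) \<longlonglongrightarrow> 0"
      using kH by (auto simp: Hspace_def)
    have Lk: "L2_rv M k" using kH by (rule Hspace_L2)
    have Yl': "(\<lambda>n. integral\<^sup>L M (\<lambda>\<omega>. (Y n \<omega> - k \<omega>)\<^sup>2)) \<longlonglongrightarrow> 0"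
      using Yl by (simp add: power2_commute)
    have "(\<lambda>n. integral\<^sup>L M (\<lambda>\<omega>. r \<omega> * Y n \<omega>)) \<longlonglongrightarrow> integral\<^sup>L M (\<lambda>\<omega>. r \<omega> * k \<omega>)"
      by (rule inner_conv[OF Lr Lk _ Yl']) (use LS YS in blast)
    moreover have "(\<lambda>n. integral\<^sup>L M (\<lambda>\<omega>. r \<omega> * Y n \<omega>)) = (\<lambda>n. 0)"
      using orth0 YS by auto
    ultimately show ?thesis using LIMSEQ_unique tendsto_const by metis
  qed
  have gH: "g \<in> Hspace M u A"
    unfolding Hspace_def using Lg yS gl' by blast
  have rG: "r \<in> Hspace M u G"
  proof -
    have gG: "g \<in> Hspace M u G" using Hspace_mono[OF AG] gH by blast
    have "(\<lambda>\<omega>. 1 * D \<omega> + (-1) * g \<omega>) \<in> Hspace M u G" by (rule Hspace_lin[OF U DH gG])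
    then show ?thesis by (simp add: r_def)
  qed
  have "(\<lambda>n. integral\<^sup>L M (\<lambda>\<omega>. r \<omega> * q n \<omega>)) \<longlonglongrightarrow> integral\<^sup>L M (\<lambda>\<omega>. r \<omega> * D \<omega>)"
    using W rG by blast
  moreover have "eventually (\<lambda>n. 0 = integral\<^sup>L M (\<lambda>\<omega>. r \<omega> * q n \<omega>)) sequentially"
    using Q by (rule eventually_mono) (simp add: orth)
  ultimately have "(\<lambda>n. 0::real) \<longlonglongrightarrow> integral\<^sup>L M (\<lambda>\<omega>. r \<omega> * D \<omega>)"
    using Lim_transform_eventually by (metis (mono_tags, lifting) eventually_mono)
  then have rD: "integral\<^sup>L M (\<lambda>\<omega>. r \<omega> * D \<omega>) = 0" using LIMSEQ_unique tendsto_const by metis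
  have "integral\<^sup>L M (\<lambda>\<omega>. r \<omega> * D \<omega>) = integral\<^sup>L M (\<lambda>\<omega>. (r \<omega>)\<^sup>2 + r \<omega> * g \<omega>)"
    by (rule Bochner_Integration.integral_cong) (simp_all add: r_def power2_eq_square algebra_simps)
  also have "\<dots> = integral\<^sup>L M (\<lambda>\<omega>. (r \<omega>)\<^sup>2) + integral\<^sup>L M (\<lambda>\<omega>. r \<omega> * g \<omega>)"
    using Lr L2_prod_integrable[OF Lr Lg] by (simp add: L2_rv_def)
  also have "integral\<^sup>L M (\<lambda>\<omega>. r \<omega> * g \<omega>) = 0" by (rule orth[OF gH])
  finally have r0: "integral\<^sup>L M (\<lambda>\<omega>. (r \<omega>)\<^sup>2) = 0" using rD by simp
  show ?thesis
    unfolding Hspace_def using LD yS conv1 r0 by (auto simp: J_def)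
qed



lemma grf_L2:
  assumes G: "gaussian_random_field M P u" and z: "z \<in> P"
  shows "L2_rv M (u z)"
proof -
  have PS: "prob_space M" using G by (simp add: gaussian_random_field_def)
  interpret prob_space M by fact
  have "gaussian_rv M (u z)" using G lin_span_single[OF z, of u] by (auto simp: gaussian_random_field_def)
  then have m[measurable]: "u z \<in> borel_measurable M" and
    cases: "(\<exists>\<mu>. AE \<omega> in M. u z \<omega> = \<mu>) \<or>
      (\<exists>\<mu> \<sigma>. 0 < \<sigma> \<and> distributed M lborel (u z) (\<lambda>x. ennreal (normal_density \<mu> \<sigma> x)))"
    by (auto simp: gaussian_rv_def)
  have "integrable M (\<lambda>\<omega>. (u z \<omega>)\<^sup>2)"
    using cases
  proof
    assume "\<exists>\<mu>. AE \<omega> in M. u z \<omega> = \<mu>"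
    then obtain \<mu> where ae: "AE \<omega> in M. u z \<omega> = \<mu>" by blast
    have "integrable M (\<lambda>\<omega>. \<mu>\<^sup>2)" by simp
    moreover have "integrable M (\<lambda>\<omega>. (u z \<omega>)\<^sup>2) \<longleftrightarrow> integrable M (\<lambda>\<omega>. \<mu>\<^sup>2)"
      by (rule integrable_cong_AE) (use ae in \<open>auto elim: AE_mp\<close>)
    ultimately show ?thesis by simp
  next
    assume "\<exists>\<mu> \<sigma>. 0 < \<sigma> \<and> distributed M lborel (u z) (\<lambda>x. ennreal (normal_density \<mu> \<sigma> x))"
    then obtain \<mu> \<sigma> where sp: "0 < \<sigma>" and D: "distributed M lborel (u z) (\<lambda>x. ennreal (normal_density \<mu> \<sigma> x))" by blast
    have i0: "integrable lborel (\<lambda>x. normal_density \<mu> \<sigma> x * (x - \<mu>)^k)" for k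
      by (rule integrable_normal_moment[OF sp])
    have "integrable lborel (\<lambda>x. normal_density \<mu> \<sigma> x * (x - \<mu>)^2 + (2*\<mu>) * (normal_density \<mu> \<sigma> x * (x - \<mu>)^1)
        + \<mu>\<^sup>2 * (normal_density \<mu> \<sigma> x * (x - \<mu>)^0))"
      by (intro Bochner_Integration.integrable_add Bochner_Integration.integrable_mult_right i0)
    moreover have "(\<lambda>x. normal_density \<mu> \<sigma> x * (x - \<mu>)^2 + (2*\<mu>) * (normal_density \<mu> \<sigma> x * (x - \<mu>)^1)
        + \<mu>\<^sup>2 * (normal_density \<mu> \<sigma> x * (x - \<mu>)^0)) = (\<lambda>x. normal_density \<mu> \<sigma> x * x\<^sup>2)"
      by (simp add: fun_eq_iff power2_eq_square algebra_simps)
    ultimately have "integrable lborel (\<lambda>x. normal_density \<mu> \<sigma> x * x\<^sup>2)" by simp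
    then show ?thesis
      using distributed_integrable[OF D, of "\<lambda>x. x\<^sup>2"] by simp
  qed
  then show ?thesis by (simp add: L2_rv_def)
qed

lemma greach_nonneg: "greach E src tgt len x y c \<Longrightarrow> 0 \<le> c"
  by (induct rule: greach.induct) auto

lemma greach_trans:
  assumes "greach E src tgt len x y c1" "greach E src tgt len y z c2"
  shows "greach E src tgt len x z (c1 + c2)"
  using assms
proof (induct rule: greach.induct)
  case (refl x) then show ?case by simp
next
  case (step e a b y c)
  have "greach E src tgt len (gpt src tgt len e b) z (c + c2)" using step by simp
  from greach.step[OF step(1,2,3) this] show ?case by (simp add: add.assoc)
qed

lemma gdist_le: "greach E src tgt len x y c \<Longrightarrow> gdist E src tgt len x y \<le> c"
  unfolding gdist_def by (rule cInf_lower) (auto intro: bdd_belowI[of _ 0] greach_nonneg)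

lemma gdist_lt:
  assumes "\<exists>c. greach E src tgt len x y c" "gdist E src tgt len x y < \<epsilon>"
  shows "\<exists>c. greach E src tgt len x y c \<and> c < \<epsilon>"
proof -
  have "{c. greach E src tgt len x y c} \<noteq> {}" using assms(1) by blast
  from cInf_lessD[OF this] assms(2) show ?thesis unfolding gdist_def by blast
qed

lemma gpt_in: "e \<in> E \<Longrightarrow> t \<in> {0..len e} \<Longrightarrow> gpt src tgt len e t \<in> gpoints V E src tgt len"
  unfolding gpoints_def by blast

lemma gnbhd_sub: "gnbhd V E src tgt len S \<epsilon> \<subseteq> gpoints V E src tgt len"
  unfolding gnbhd_def by blast

lemma gnbhd_mono: "S \<subseteq> T \<Longrightarrow> gnbhd V E src tgt len S \<epsilon> \<subseteq> gnbhd V E src tgt len T \<epsilon>"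
  unfolding gnbhd_def by blast

lemma self_in:
  assumes "x \<in> gpoints V E src tgt len" "0 < \<epsilon>"
  shows "x \<in> gnbhd V E src tgt len {x} \<epsilon>"
proof -
  have "gdist E src tgt len x x \<le> 0" by (rule gdist_le, rule greach.refl)
  then show ?thesis using assms unfolding gnbhd_def by force
qed

lemma ball_shrink:
  assumes conn: "\<forall>x\<in>gpoints V E src tgt len. \<forall>y\<in>gpoints V E src tgt len. \<exists>c. greach E src tgt len x y c"
    and e: "e \<in> E" and t: "t \<in> {0..len e}" and \<tau>: "\<tau> \<in> {0..len e}" and d: "\<bar>\<tau> - t\<bar> < \<epsilon>/2"
  shows "gnbhd V E src tgt len {gpt src tgt len e \<tau>} (\<epsilon>/2) \<subseteq> gnbhd V E src tgt len {gpt src tgt len e t} \<epsilon>"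
proof
  fix z assume z: "z \<in> gnbhd V E src tgt len {gpt src tgt len e \<tau>} (\<epsilon>/2)"
  then have zG: "z \<in> gpoints V E src tgt len" and zd: "gdist E src tgt len z (gpt src tgt len e \<tau>) < \<epsilon>/2"
    unfolding gnbhd_def by auto
  obtain c1 where c1: "greach E src tgt len z (gpt src tgt len e \<tau>) c1" "c1 < \<epsilon>/2"
    using gdist_lt[OF _ zd] conn zG gpt_in[where V=V and src=src and tgt=tgt and len=len and E=E, OF e \<tau>] by blast
  have "greach E src tgt len (gpt src tgt len e \<tau>) (gpt src tgt len e t) (\<bar>\<tau> - t\<bar> + 0)"
    by (rule greach.step; (rule e \<tau> t greach.refl)?)
  from greach_trans[OF c1(1) this] have "gdist E src tgt len z (gpt src tgt len e t) \<le> c1 + (\<bar>\<tau> - t\<bar> + 0)"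
    by (rule gdist_le)
  then have "gdist E src tgt len z (gpt src tgt len e t) < \<epsilon>" using c1(2) d by linarith
  then show "z \<in> gnbhd V E src tgt len {gpt src tgt len e t} \<epsilon>" using zG unfolding gnbhd_def by blast
qed



lemma seq_exists:
  fixes t l :: real
  assumes "0 < l" "t \<in> {0..l}"
  shows "\<exists>tn. (\<forall>n. tn n \<in> {0..l} - {t}) \<and> tn \<longlonglongrightarrow> t"
proof -
  define c where "c = (if t < l then l - t else - t)"
  define tn where "tn n = t + c / real (n + 2)" for n
  have c0: "c \<noteq> 0" using assms by (auto simp: c_def)
  have "tn n \<in> {0..l} - {t}" for n
  proof -
    have np: "(1::real) \<le> real (n + 2)" by simp
    show ?thesis
    proof (cases "t < l")
      case True
      then have c: "c = l - t" "0 < c" by (auto simp: c_def)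
      have "c / real (n + 2) \<le> c" using divide_left_mono[OF np, of c] c by simp
      moreover have "0 < c / real (n + 2)" using c by simp
      ultimately show ?thesis using assms c by (auto simp: tn_def)
    next
      case False
      then have tl: "t = l" using assms by auto
      then have c: "c = - t" "0 < t" using assms by (auto simp: c_def)
      have "t / real (n + 2) \<le> t" using divide_left_mono[OF np, of t] c by simp
      moreover have "0 < t / real (n + 2)" using c by simp
      ultimately show ?thesis using assms c tl by (auto simp: tn_def)
    qed
  qed
  moreover have "tn \<longlonglongrightarrow> t"
  proof -
    have "(\<lambda>n. c / real n) \<longlonglongrightarrow> 0" by (rule lim_const_over_n)
    then have "(\<lambda>n. c / real (n + 2)) \<longlonglongrightarrow> 0" by (rule LIMSEQ_ignore_initial_segment)
    then have "(\<lambda>n. t + c / real (n + 2)) \<longlonglongrightarrow> t + 0" by (intro tendsto_add tendsto_const)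
    moreover have "tn = (\<lambda>n. t + c / real (n + 2))" by (simp add: fun_eq_iff tn_def)
    ultimately show ?thesis by simp
  qed
  ultimately show ?thesis by blast
qed

theorem mainTheorem6:
  fixes M :: "'w measure"
    and V :: "'v set" and E :: "'e set" and src tgt :: "'e \<Rightarrow> 'v" and len :: "'e \<Rightarrow> real"
    and u :: "('v, 'e) gpoint \<Rightarrow> 'w \<Rightarrow> real" and p :: nat and S :: "('v, 'e) gpoint set"
  assumes "compact_connected_metric_graph V E src tgt len"
    and "differentiable_GRF M V E src tgt len u p"
    and "gopen V E src tgt len S"
    and "finite (gboundary V E src tgt len S)"
  shows "\<forall>s\<in>gboundary V E src tgt len S. \<forall>e\<in>incident_edges E src tgt s.
           \<forall>D. weak_deriv_family M V E src tgt len u p e D \<longrightarrow>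
             (\<forall>t\<in>{0..len e}. gpt src tgt len e t = s \<longrightarrow>
               (\<forall>j\<le>p. D j t \<in> Hplus M V E src tgt len u (gboundary V E src tgt len S)))"
proof (intro ballI allI impI)
  fix s e D t j
  assume sB: "s \<in> gboundary V E src tgt len S" and eI: "e \<in> incident_edges E src tgt s"
    and wdf: "weak_deriv_family M V E src tgt len u p e D" and t: "t \<in> {0..len e}"
    and st: "gpt src tgt len e t = s" and jp: "j \<le> p"
  define G where "G = gpoints V E src tgt len"
  have cg: "compact_connected_metric_graph V E src tgt len" by fact
  have conn: "\<forall>x\<in>gpoints V E src tgt len. \<forall>y\<in>gpoints V E src tgt len. \<exists>c. greach E src tgt len x y c"
    using cg by (simp add: compact_connected_metric_graph_def)
  have grf: "gaussian_random_field M G u" using assms(2) by (simp add: differentiable_GRF_def G_def)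
  have P: "prob_space M" using grf by (simp add: gaussian_random_field_def)
  have U: "\<forall>z\<in>G. L2_rv M (u z)" using grf_L2[OF grf] by blast
  have sG: "s \<in> G" using sB unfolding gboundary_def gclosure_def G_def by blast
  have eE: "e \<in> E"
  proof (cases s)
    case (Inl v) then show ?thesis using eI by (simp add: incident_edges_def)
  next
    case (Inr q)
    then obtain e' t' where q: "s = Inr (e', t')" by (cases q) auto
    then have "e = e'" using eI by (simp add: incident_edges_def)
    moreover have "Inr (e', t') \<in> gpoints V E src tgt len" using sG q by (simp add: G_def)
    ultimately show ?thesis by (auto simp: gpoints_def gpt_def split: if_splits)
  qed
  have lpos: "0 < len e" using cg eE by (simp add: compact_connected_metric_graph_def)
  have claim: "\<forall>t\<in>{0..len e}. \<forall>\<epsilon>>0. D j t \<in> Hspace M u (gnbhd V E src tgt len {gpt src tgt len e t} \<epsilon>)"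
    if "j \<le> p" for j
    using that
  proof (induct j)
    case 0
    show ?case
    proof (intro ballI allI impI)
      fix t \<epsilon> :: real assume t: "t \<in> {0..len e}" and e0: "0 < \<epsilon>"
      have D0: "D 0 t = u (gpt src tgt len e t)" using wdf t by (simp add: weak_deriv_family_def)
      have gG: "gpt src tgt len e t \<in> G" unfolding G_def by (rule gpt_in[where len=len and E=E, OF eE t])
      show "D 0 t \<in> Hspace M u (gnbhd V E src tgt len {gpt src tgt len e t} \<epsilon>)"
        unfolding D0 by (rule Hspace_single[OF self_in]) (use gG e0 U in \<open>auto simp: G_def\<close>)
    qed
  next
    case (Suc j)
    then have jp': "j < p" and IH: "\<forall>t\<in>{0..len e}. \<forall>\<epsilon>>0. D j t \<in> Hspace M u (gnbhd V E src tgt len {gpt src tgt len e t} \<epsilon>)"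
      by auto
    show ?case
    proof (intro ballI allI impI)
      fix t \<epsilon> :: real assume t: "t \<in> {0..len e}" and e0: "0 < \<epsilon>"
      define A where "A = gnbhd V E src tgt len {gpt src tgt len e t} \<epsilon>"
      have AG: "A \<subseteq> G" unfolding A_def G_def by (rule gnbhd_sub)
      have UA: "\<forall>z\<in>A. L2_rv M (u z)" using U AG by blast
      have wd: "weak_deriv_at M (Hspace M u G) (len e) (D j) (D (Suc j) t) t"
        using wdf jp' t by (simp add: weak_deriv_family_def G_def)
      obtain tn where tn: "\<forall>n. tn n \<in> {0..len e} - {t}" and tl: "tn \<longlonglongrightarrow> t"
        using seq_exists[OF lpos t] by blast
      define q where "q n = (\<lambda>\<omega>. (D j (tn n) \<omega> - D j t \<omega>) / (tn n - t))" for n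
      have DH: "D (Suc j) t \<in> Hspace M u G" using wd by (simp add: weak_deriv_at_def)
      have W: "\<forall>w\<in>Hspace M u G. (\<lambda>n. integral\<^sup>L M (\<lambda>\<omega>. w \<omega> * q n \<omega>)) \<longlonglongrightarrow> integral\<^sup>L M (\<lambda>\<omega>. w \<omega> * D (Suc j) t \<omega>)"
        using wd tn tl unfolding weak_deriv_at_def q_def by blast
      have "eventually (\<lambda>n. dist (tn n) t < \<epsilon>/2) sequentially"
        using tl e0 unfolding tendsto_iff by (metis half_gt_zero)
      then have Q: "eventually (\<lambda>n. q n \<in> Hspace M u A) sequentially"
      proof (rule eventually_mono)
        fix n assume dn: "dist (tn n) t < \<epsilon>/2"
        have tnI: "tn n \<in> {0..len e}" and tnt: "tn n \<noteq> t" using tn by auto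
        have h1: "D j (tn n) \<in> Hspace M u A"
        proof -
          have "D j (tn n) \<in> Hspace M u (gnbhd V E src tgt len {gpt src tgt len e (tn n)} (\<epsilon>/2))"
            using IH tnI e0 by simp
          moreover have "gnbhd V E src tgt len {gpt src tgt len e (tn n)} (\<epsilon>/2) \<subseteq> A"
            unfolding A_def by (rule ball_shrink[OF conn eE t tnI]) (use dn in \<open>simp add: dist_real_def\<close>)
          ultimately show ?thesis using Hspace_mono by blast
        qed
        have h2: "D j t \<in> Hspace M u A" using IH t e0 by (simp add: A_def)
        have "(\<lambda>\<omega>. (1 / (tn n - t)) * D j (tn n) \<omega> + (- 1 / (tn n - t)) * D j t \<omega>) \<in> Hspace M u A"
          by (rule Hspace_lin[OF UA h1 h2])
        moreover have "(\<lambda>\<omega>. (1 / (tn n - t)) * D j (tn n) \<omega> + (- 1 / (tn n - t)) * D j t \<omega>) = q n"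
          by (simp add: q_def fun_eq_iff diff_divide_distrib)
        ultimately show "q n \<in> Hspace M u A" by simp
      qed
      show "D (Suc j) t \<in> Hspace M u A"
        by (rule weak_closed[OF P U AG DH Q W])
    qed
  qed
  show "D j t \<in> Hplus M V E src tgt len u (gboundary V E src tgt len S)"
    unfolding Hplus_def
  proof (rule INT_I)
    fix \<epsilon> :: real assume "\<epsilon> \<in> {0<..}"
    then have e0: "0 < \<epsilon>" by simp
    have "D j t \<in> Hspace M u (gnbhd V E src tgt len {gpt src tgt len e t} \<epsilon>)"
      using claim[OF jp] t e0 by blast
    moreover have "gnbhd V E src tgt len {gpt src tgt len e t} \<epsilon> \<subseteq> gnbhd V E src tgt len (gboundary V E src tgt len S) \<epsilon>"
      by (rule gnbhd_mono) (use sB st in simp)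
    ultimately show "D j t \<in> Hspace M u (gnbhd V E src tgt len (gboundary V E src tgt len S) \<epsilon>)"
      using Hspace_mono by blast
  qed
qed


end
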